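(* Let $\mathbf{G}$ be a linear operator on $\mathbb{R}^{n_1\times\cdots\times n_d}$ and consider the explicit $s$-step linear multistep method $\mathbf{u}^{k+s}+\sum_{j=0}^{s-1}a_j\mathbf{u}^{k+j}=\Delta t\sum_{j=0}^{s-1}b_j\mathbf{G}\mathbf{u}^{k+j}$, written as the one-step recurrence $\mathbf{v}^{k+1}=\mathbf{L}_{\Delta t}\mathbf{v}^{k}$ with $\mathbf{v}^{k+1}=(\mathbf{u}^{k+s},\mathbf{u}^{k+s-1},\dots,\mathbf{u}^{k+1})$ and $$\mathbf{L}_{\Delta t}=\begin{bmatrix} b_{s-1}\Delta t\mathbf{G}-a_{s-1}\mathbf{I} & \cdots & b_1\Delta t\mathbf{G}-a_1\mathbf{I} & b_0\Delta t\mathbf{G}-a_0\mathbf{I}\\ \mathbf{I}&\cdots&\mathbf{0}&\mathbf{0}\\ \vdots&\ddots&\vdots&\vdots\\ \mathbf{0}&\cdots&\mathbf{I}&\mathbf{0}\end{bmatrix}.$$ Suppose this linear scheme is Lax-stable, i.e. there is a constant $K$ with $\|\mathbf{L}_{\Delta t}\|_2\le 1+K\Delta t$. Then the rank-truncated scheme $\mathbf{v}^{k+1}=\mathfrak{T}_r(\mathbf{L}_{\Delta t}\mathbf{v}^{k})$ is stable: for every $T>0$ there is a constant $C_T$ (one may take $C_T=e^{KT}$) such that $\|\mathbf{v}^{k}\|_2\le C_T\|\mathbf{v}^{0}\|_2$ for all $k$ with $k\Delta t\le T$.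
   Context: $\|\cdot\|_2$ on tensors (and on block vectors of tensors) is the Euclidean norm of all entries, and $\|\mathbf{L}_{\Delta t}\|_2$ is the induced operator norm. $\mathfrak{T}_r$ is the hierarchical (HOSVD-based) rank-$r$ truncation operator with respect to a fixed dimension tree $\mathcal{T}_d$ and target ranks $r=(r_t)$, applied to each tensor block of the block vector. For a single tensor, $\mathfrak{T}_r(\mathbf{x})=\prod_{t\in\mathcal{T}_d^{p}}\mathbf{P}_t\cdots\prod_{t\in\mathcal{T}_d^{1}}\mathbf{P}_t\,\mathbf{x}$, where $\mathcal{T}_d^l$ is the set of tree nodes at distance $l$ from the root, $p$ is the tree depth, and each $\mathbf{P}_t$ (depending on $\mathbf{x}$) is the orthogonal projection acting on the $t$-mode matricization $\mathbf{x}^{(t)}$ (rows indexed by the modes in $t$) onto the span of its leading $r_t$ left singular vectors. *)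

theory Defs
  imports Complex_Main
begin

text \<open>Modes are 0..<d, mode k has size n k. A tensor is a real-valued
  function on multi-indices; only its values on the index set matter.\<close>

type_synonym midx = "nat \<Rightarrow> nat"
type_synonym tensor = "midx \<Rightarrow> real"

definition idx_set :: "nat \<Rightarrow> (nat \<Rightarrow> nat) \<Rightarrow> midx set" where
  "idx_set d n = {i. \<forall>k. (k < d \<longrightarrow> i k < n k) \<and> (d \<le> k \<longrightarrow> i k = 0)}"

text \<open>Block vectors of s tensors: v q is the q-th block (q < s).\<close>
type_synonym bvec = "nat \<Rightarrow> tensor"

definition bnorm :: "nat \<Rightarrow> (nat \<Rightarrow> nat) \<Rightarrow> nat \<Rightarrow> bvec \<Rightarrow> real" where
  "bnorm d n s v = sqrt (\<Sum>q<s. \<Sum>i\<in>idx_set d n. (v q i)^2)"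

text \<open>A general linear operator on the tensor space, given by its kernel g.\<close>
definition lin_app :: "nat \<Rightarrow> (nat \<Rightarrow> nat) \<Rightarrow> (midx \<Rightarrow> midx \<Rightarrow> real) \<Rightarrow> tensor \<Rightarrow> tensor" where
  "lin_app d n g x = (\<lambda>i. \<Sum>j\<in>idx_set d n. g i j * x j)"

text \<open>Block 0 is the new value, block q (q>=1) is block q-1 of the argument;
  column c of the first block row carries coefficient index s-1-c.\<close>
definition Lop :: "nat \<Rightarrow> (nat \<Rightarrow> nat) \<Rightarrow> (midx \<Rightarrow> midx \<Rightarrow> real) \<Rightarrow> nat \<Rightarrow>
    (nat \<Rightarrow> real) \<Rightarrow> (nat \<Rightarrow> real) \<Rightarrow> real \<Rightarrow> bvec \<Rightarrow> bvec" where
  "Lop d n g s a b dt v = (\<lambda>q. if q = 0 then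
       (\<lambda>i. \<Sum>c<s. b (s - 1 - c) * dt * lin_app d n g (v c) i - a (s - 1 - c) * v c i)
     else v (q - 1))"

definition op_norm :: "nat \<Rightarrow> (nat \<Rightarrow> nat) \<Rightarrow> nat \<Rightarrow> (bvec \<Rightarrow> bvec) \<Rightarrow> real" where
  "op_norm d n s L = Inf {c. 0 \<le> c \<and> (\<forall>v. bnorm d n s (L v) \<le> c * bnorm d n s v)}"

datatype dtree = Leaf nat | Node dtree dtree

fun leaves :: "dtree \<Rightarrow> nat list" where
  "leaves (Leaf k) = [k]"
| "leaves (Node l r) = leaves l @ leaves r"

definition modes :: "dtree \<Rightarrow> nat set" where
  "modes tr = set (leaves tr)"

definition dim_tree :: "nat \<Rightarrow> dtree \<Rightarrow> bool" where
  "dim_tree d tr \<longleftrightarrow> distinct (leaves tr) \<and> set (leaves tr) = {0..<d}"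

fun nodes_at :: "dtree \<Rightarrow> nat \<Rightarrow> nat set list" where
  "nodes_at tr 0 = [modes tr]"
| "nodes_at (Leaf k) (Suc l) = []"
| "nodes_at (Node a b) (Suc l) = nodes_at a l @ nodes_at b l"

fun depth :: "dtree \<Rightarrow> nat" where
  "depth (Leaf k) = 0"
| "depth (Node a b) = Suc (max (depth a) (depth b))"

definition restr :: "nat set \<Rightarrow> midx \<Rightarrow> midx" where
  "restr t i = (\<lambda>k. if k \<in> t then i k else 0)"

definition merge :: "nat set \<Rightarrow> midx \<Rightarrow> midx \<Rightarrow> midx" where
  "merge t a b = (\<lambda>k. if k \<in> t then a k else b k)"

definition rows :: "nat \<Rightarrow> (nat \<Rightarrow> nat) \<Rightarrow> nat set \<Rightarrow> midx set" where
  "rows d n t = restr t ` idx_set d n"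

definition cols :: "nat \<Rightarrow> (nat \<Rightarrow> nat) \<Rightarrow> nat set \<Rightarrow> midx set" where
  "cols d n t = restr (- t) ` idx_set d n"

definition matricize :: "nat set \<Rightarrow> tensor \<Rightarrow> midx \<Rightarrow> midx \<Rightarrow> real" where
  "matricize t x a b = x (merge t a b)"

definition orthonormal_on :: "'i set \<Rightarrow> nat \<Rightarrow> (nat \<Rightarrow> 'i \<Rightarrow> real) \<Rightarrow> bool" where
  "orthonormal_on R p u \<longleftrightarrow>
     (\<forall>j<p. \<forall>j'<p. (\<Sum>a\<in>R. u j a * u j' a) = (if j = j' then 1 else 0))"

definition leading_proj :: "'i set \<Rightarrow> 'k set \<Rightarrow> ('i \<Rightarrow> 'k \<Rightarrow> real) \<Rightarrow> nat \<Rightarrow>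
    ('i \<Rightarrow> 'i \<Rightarrow> real) \<Rightarrow> bool" where
  "leading_proj R C M r P \<longleftrightarrow>
     (\<exists>sigma u w. let p = min (card R) (card C) in
        orthonormal_on R p u \<and> orthonormal_on C p w \<and>
        (\<forall>j<p. 0 \<le> sigma j) \<and> (\<forall>j j'. j \<le> j' \<longrightarrow> j' < p \<longrightarrow> sigma j' \<le> sigma j) \<and>
        (\<forall>a\<in>R. \<forall>b\<in>C. M a b = (\<Sum>j<p. sigma j * u j a * w j b)) \<and>
        (\<forall>a\<in>R. \<forall>a'\<in>R. P a a' = (\<Sum>j<min r p. u j a * u j a')))"

definition apply_proj :: "nat \<Rightarrow> (nat \<Rightarrow> nat) \<Rightarrow> nat set \<Rightarrow> (midx \<Rightarrow> midx \<Rightarrow> real) \<Rightarrow> tensor \<Rightarrow> tensor" where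
  "apply_proj d n t P z = (\<lambda>i. \<Sum>a'\<in>rows d n t. P (restr t i) a' * z (merge t a' i))"

text \<open>prod_{t in T^p} P_t ... prod_{t in T^1} P_t z : level 1 applied first.\<close>
definition apply_levels :: "nat \<Rightarrow> (nat \<Rightarrow> nat) \<Rightarrow> dtree \<Rightarrow> (nat set \<Rightarrow> midx \<Rightarrow> midx \<Rightarrow> real) \<Rightarrow> tensor \<Rightarrow> tensor" where
  "apply_levels d n tr P z =
     fold (\<lambda>t y. apply_proj d n t (P t) y) (concat (map (nodes_at tr) [1..<Suc (depth tr)])) z"

text \<open>y is a hierarchical rank-r truncation T_r(x) (any admissible choice of leading
  singular vectors, all projections computed from x). Equality is on the index set.\<close>
definition is_trunc :: "nat \<Rightarrow> (nat \<Rightarrow> nat) \<Rightarrow> dtree \<Rightarrow> (nat set \<Rightarrow> nat) \<Rightarrow> tensor \<Rightarrow> tensor \<Rightarrow> bool" where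
  "is_trunc d n tr r x y \<longleftrightarrow>
     (\<exists>P. (\<forall>l\<in>{1..depth tr}. \<forall>t\<in>set (nodes_at tr l).
            leading_proj (rows d n t) (cols d n t) (matricize t x) (r t) (P t)) \<and>
          (\<forall>i\<in>idx_set d n. y i = apply_levels d n tr P x i))"

end

theory Submission imports Defs "HOL-Library.FuncSet" begin

lemma bessel:
  fixes R :: "'i set" and u :: "nat \<Rightarrow> 'i \<Rightarrow> real"
  assumes fin: "finite R" and on: "orthonormal_on R p u" and mp: "m \<le> p"
  shows "(\<Sum>a\<in>R. (\<Sum>a'\<in>R. (\<Sum>j<m. u j a * u j a') * w a')^2) \<le> (\<Sum>a\<in>R. (w a)^2)"
proof -
  define al where "al j = (\<Sum>a'\<in>R. u j a' * w a')" for j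
  define pw where "pw a = (\<Sum>j<m. al j * u j a)" for a
  have e1: "(\<Sum>a'\<in>R. (\<Sum>j<m. u j a * u j a') * w a') = pw a" for a
  proof -
    have "(\<Sum>a'\<in>R. (\<Sum>j<m. u j a * u j a') * w a') = (\<Sum>a'\<in>R. \<Sum>j<m. u j a * (u j a' * w a'))"
      by (simp add: sum_distrib_right mult.assoc)
    also have "\<dots> = (\<Sum>j<m. \<Sum>a'\<in>R. u j a * (u j a' * w a'))"
      by (rule sum.swap)
    also have "\<dots> = pw a" unfolding pw_def al_def
      by (simp add: sum_distrib_left[symmetric] mult.commute)
    finally show ?thesis .
  qed
  have orth: "j < m \<Longrightarrow> j' < m \<Longrightarrow> (\<Sum>a\<in>R. u j a * u j' a) = (if j = j' then 1 else 0)" for j j'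
    using on mp unfolding orthonormal_on_def by auto
  have e2: "(\<Sum>a\<in>R. (pw a)^2) = (\<Sum>j<m. (al j)^2)"
  proof -
    have "(\<Sum>a\<in>R. (pw a)^2) = (\<Sum>a\<in>R. \<Sum>j<m. \<Sum>j'<m. al j * al j' * (u j a * u j' a))"
      unfolding pw_def power2_eq_square sum_product
      by (intro sum.cong refl) (simp add: mult_ac)
    also have "\<dots> = (\<Sum>j<m. \<Sum>a\<in>R. \<Sum>j'<m. al j * al j' * (u j a * u j' a))"
      by (rule sum.swap)
    also have "\<dots> = (\<Sum>j<m. \<Sum>j'<m. \<Sum>a\<in>R. al j * al j' * (u j a * u j' a))"
      by (intro sum.cong refl) (rule sum.swap)
    also have "\<dots> = (\<Sum>j<m. \<Sum>j'<m. al j * al j' * (if j = j' then 1 else 0))"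
      by (intro sum.cong refl) (simp add: orth sum_distrib_left[symmetric])
    also have "\<dots> = (\<Sum>j<m. (al j)^2)"
      by (intro sum.cong refl) (simp add: power2_eq_square if_distrib sum.delta cong: if_cong)
    finally show ?thesis .
  qed
  have e3: "(\<Sum>a\<in>R. w a * pw a) = (\<Sum>j<m. (al j)^2)"
  proof -
    have "(\<Sum>a\<in>R. w a * pw a) = (\<Sum>a\<in>R. \<Sum>j<m. al j * (u j a * w a))"
      unfolding pw_def by (simp add: sum_distrib_left mult_ac)
    also have "\<dots> = (\<Sum>j<m. \<Sum>a\<in>R. al j * (u j a * w a))" by (rule sum.swap)
    also have "\<dots> = (\<Sum>j<m. (al j)^2)"
      by (simp add: sum_distrib_left[symmetric] al_def power2_eq_square)
    finally show ?thesis .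
  qed
  have "0 \<le> (\<Sum>a\<in>R. (w a - pw a)^2)" by (simp add: sum_nonneg)
  also have "\<dots> = (\<Sum>a\<in>R. (w a)^2) - 2 * (\<Sum>a\<in>R. w a * pw a) + (\<Sum>a\<in>R. (pw a)^2)"
    by (simp add: power2_diff sum.distrib sum_subtractf sum_distrib_left mult.assoc)
  finally have "(\<Sum>a\<in>R. (pw a)^2) \<le> (\<Sum>a\<in>R. (w a)^2)" using e2 e3 by simp
  then show ?thesis by (simp add: e1)
qed


lemma finite_idx: "finite (idx_set d n)"
proof -
  let ?f = "\<lambda>i::midx. restrict i {0..<d}"
  have "?f ` idx_set d n \<subseteq> PiE {0..<d} (\<lambda>k. {..<n k})"
    by (auto simp: idx_set_def PiE_def)
  then have "finite (?f ` idx_set d n)" by (rule finite_subset) (simp add: finite_PiE)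
  moreover have "inj_on ?f (idx_set d n)"
  proof
    fix x y assume x: "x \<in> idx_set d n" and y: "y \<in> idx_set d n" and e: "?f x = ?f y"
    show "x = y"
    proof
      fix k show "x k = y k"
      proof (cases "k < d")
        case True then show ?thesis using fun_cong[OF e, of k] by simp
      next
        case False then show ?thesis using x y by (simp add: idx_set_def)
      qed
    qed
  qed
  ultimately show ?thesis by (rule finite_imageD)
qed

lemma merge_restr: "merge t (restr t i) (restr (- t) i) = i"
  by (auto simp: merge_def restr_def)

lemma merge_in:
  assumes "a \<in> rows d n t" "c \<in> cols d n t" shows "merge t a c \<in> idx_set d n"
  using assms by (auto simp: rows_def cols_def idx_set_def merge_def restr_def)

lemma restr_merge1: "a \<in> rows d n t \<Longrightarrow> restr t (merge t a c) = a"
  by (auto simp: rows_def merge_def restr_def)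

lemma restr_merge2: "c \<in> cols d n t \<Longrightarrow> restr (- t) (merge t a c) = c"
  by (auto simp: cols_def merge_def restr_def)

lemma restr_merge_gen: "restr t (merge t a c) = restr t a" "restr (- t) (merge t a c) = restr (- t) c"
  "restr t (restr t x) = restr t x" "restr (- t) (restr (- t) x) = restr (- t) x"
  by (auto simp: merge_def restr_def)

lemma merge_merge: "merge t a' (merge t a c) = merge t a' c"
  by (auto simp: merge_def)

lemma sum_split:
  "(\<Sum>i\<in>idx_set d n. F i) = (\<Sum>c\<in>cols d n t. \<Sum>a\<in>rows d n t. F (merge t a c))"
proof -
  have "(\<Sum>c\<in>cols d n t. \<Sum>a\<in>rows d n t. F (merge t a c)) =
        (\<Sum>p\<in>cols d n t \<times> rows d n t. F (merge t (snd p) (fst p)))"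
    by (simp add: sum.cartesian_product split_def)
  also have "\<dots> = (\<Sum>i\<in>idx_set d n. F i)"
    by (rule sum.reindex_bij_witness[where j = "\<lambda>p. merge t (snd p) (fst p)"
          and i = "\<lambda>i. (restr (- t) i, restr t i)"])
       (auto simp: merge_restr merge_in restr_merge1 restr_merge2 restr_merge_gen rows_def cols_def)
  finally show ?thesis by simp
qed

lemma proj_contr:
  assumes lp: "leading_proj (rows d n t) (cols d n t) M rr Pt"
  shows "(\<Sum>i\<in>idx_set d n. (apply_proj d n t Pt z i)^2) \<le> (\<Sum>i\<in>idx_set d n. (z i)^2)"
proof -
  let ?R = "rows d n t" and ?C = "cols d n t"
  obtain u p where on: "orthonormal_on ?R p u"
     and P: "\<forall>a\<in>?R. \<forall>a'\<in>?R. Pt a a' = (\<Sum>j<min rr p. u j a * u j a')"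
    using lp unfolding leading_proj_def Let_def by blast
  have finR: "finite ?R" using finite_idx by (simp add: rows_def)
  have "(\<Sum>i\<in>idx_set d n. (apply_proj d n t Pt z i)^2) =
     (\<Sum>c\<in>?C. \<Sum>a\<in>?R. (apply_proj d n t Pt z (merge t a c))^2)" by (rule sum_split)
  also have "\<dots> = (\<Sum>c\<in>?C. \<Sum>a\<in>?R. (\<Sum>a'\<in>?R. (\<Sum>j<min rr p. u j a * u j a') * z (merge t a' c))^2)"
    unfolding apply_proj_def
    by (intro sum.cong refl) (simp add: restr_merge1 merge_merge P)
  also have "\<dots> \<le> (\<Sum>c\<in>?C. \<Sum>a\<in>?R. (z (merge t a c))^2)"
    by (intro sum_mono bessel[OF finR on]) simp
  also have "\<dots> = (\<Sum>i\<in>idx_set d n. (z i)^2)" by (rule sum_split[symmetric])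
  finally show ?thesis .
qed

lemma fold_contr:
  assumes "\<forall>t\<in>set ts. \<exists>M rr. leading_proj (rows d n t) (cols d n t) M rr (P t)"
  shows "(\<Sum>i\<in>idx_set d n. (fold (\<lambda>t y. apply_proj d n t (P t) y) ts z i)^2) \<le> (\<Sum>i\<in>idx_set d n. (z i)^2)"
  using assms
proof (induction ts arbitrary: z)
  case Nil then show ?case by simp
next
  case (Cons t ts)
  then obtain M rr where "leading_proj (rows d n t) (cols d n t) M rr (P t)" by auto
  then have "(\<Sum>i\<in>idx_set d n. (apply_proj d n t (P t) z i)^2) \<le> (\<Sum>i\<in>idx_set d n. (z i)^2)"
    by (rule proj_contr)
  with Cons.IH[of "apply_proj d n t (P t) z"] Cons.prems show ?case by simp
qed

lemma trunc_contr:
  assumes "is_trunc d n tr r x y"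
  shows "(\<Sum>i\<in>idx_set d n. (y i)^2) \<le> (\<Sum>i\<in>idx_set d n. (x i)^2)"
proof -
  obtain P where P: "\<forall>l\<in>{1..depth tr}. \<forall>t\<in>set (nodes_at tr l).
            leading_proj (rows d n t) (cols d n t) (matricize t x) (r t) (P t)"
     and y: "\<forall>i\<in>idx_set d n. y i = apply_levels d n tr P x i"
    using assms unfolding is_trunc_def by blast
  have "(\<Sum>i\<in>idx_set d n. (y i)^2) = (\<Sum>i\<in>idx_set d n. (apply_levels d n tr P x i)^2)"
    using y by simp
  also have "\<dots> \<le> (\<Sum>i\<in>idx_set d n. (x i)^2)"
    unfolding apply_levels_def
    by (rule fold_contr) (use P in \<open>fastforce simp: atLeastLessThanSuc_atLeastAtMost\<close>)
  finally show ?thesis .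
qed


lemma entry_le_bnorm:
  assumes "q < s" "i \<in> idx_set d n" shows "\<bar>w q i\<bar> \<le> bnorm d n s w"
proof -
  have "(w q i)^2 \<le> (\<Sum>i\<in>idx_set d n. (w q i)^2)"
    by (rule member_le_sum) (use assms finite_idx in auto)
  also have "\<dots> \<le> (\<Sum>q<s. \<Sum>i\<in>idx_set d n. (w q i)^2)"
    by (rule member_le_sum[where f = "\<lambda>q. \<Sum>i\<in>idx_set d n. (w q i)^2"]) (use assms in \<open>auto intro: sum_nonneg\<close>)
  finally show ?thesis unfolding bnorm_def using real_sqrt_le_mono by fastforce
qed

lemma Lop_bounded:
  assumes s: "1 \<le> s"
  shows "\<exists>c\<ge>0. \<forall>w. bnorm d n s (Lop d n g s a b dt w) \<le> c * bnorm d n s w"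
proof -
  let ?I = "idx_set d n"
  define Gi where "Gi i = (\<Sum>j\<in>?I. \<bar>g i j\<bar>)" for i
  define A where "A i = (\<Sum>c<s. \<bar>b (s - 1 - c)\<bar> * \<bar>dt\<bar> * Gi i + \<bar>a (s - 1 - c)\<bar>)" for i
  define M where "M = (\<Sum>i\<in>?I. (A i)^2)"
  have M0: "0 \<le> M" unfolding M_def by (simp add: sum_nonneg)
  show ?thesis
  proof (intro exI[of _ "sqrt (M + 1)"] conjI allI)
    show "0 \<le> sqrt (M + 1)" using M0 by simp
    fix w
    let ?S = "bnorm d n s w"
    have S0: "0 \<le> ?S" by (simp add: bnorm_def sum_nonneg)
    have lin: "\<bar>lin_app d n g (w c) i\<bar> \<le> Gi i * ?S" if "c < s" for c i
    proof -
      have "\<bar>lin_app d n g (w c) i\<bar> \<le> (\<Sum>j\<in>?I. \<bar>g i j * w c j\<bar>)"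
        unfolding lin_app_def by (rule sum_abs)
      also have "\<dots> \<le> (\<Sum>j\<in>?I. \<bar>g i j\<bar> * ?S)"
        by (intro sum_mono) (simp add: abs_mult mult_left_mono entry_le_bnorm that)
      finally show ?thesis by (simp add: Gi_def sum_distrib_right)
    qed
    have ent: "\<bar>Lop d n g s a b dt w 0 i\<bar> \<le> A i * ?S" if iI: "i \<in> ?I" for i
    proof -
      have "\<bar>Lop d n g s a b dt w 0 i\<bar> \<le>
          (\<Sum>c<s. \<bar>b (s - 1 - c) * dt * lin_app d n g (w c) i - a (s - 1 - c) * w c i\<bar>)"
        unfolding Lop_def by (simp add: sum_abs)
      also have "\<dots> \<le> (\<Sum>c<s. (\<bar>b (s - 1 - c)\<bar> * \<bar>dt\<bar> * Gi i + \<bar>a (s - 1 - c)\<bar>) * ?S)"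
      proof (intro sum_mono)
        fix c assume "c \<in> {..<s}"
        then have c: "c < s" by simp
        have "\<bar>b (s - 1 - c) * dt * lin_app d n g (w c) i - a (s - 1 - c) * w c i\<bar>
           \<le> \<bar>b (s - 1 - c)\<bar> * \<bar>dt\<bar> * \<bar>lin_app d n g (w c) i\<bar> + \<bar>a (s - 1 - c)\<bar> * \<bar>w c i\<bar>"
          using abs_triangle_ineq4[of "b (s - 1 - c) * dt * lin_app d n g (w c) i" "a (s - 1 - c) * w c i"]
          by (simp add: abs_mult)
        also have "\<dots> \<le> \<bar>b (s - 1 - c)\<bar> * \<bar>dt\<bar> * (Gi i * ?S) + \<bar>a (s - 1 - c)\<bar> * ?S"
          apply (intro add_mono mult_left_mono lin c)
          apply (auto intro: entry_le_bnorm c iI)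
          done
        finally show "\<bar>b (s - 1 - c) * dt * lin_app d n g (w c) i - a (s - 1 - c) * w c i\<bar>
           \<le> (\<bar>b (s - 1 - c)\<bar> * \<bar>dt\<bar> * Gi i + \<bar>a (s - 1 - c)\<bar>) * ?S"
          by (simp add: algebra_simps)
      qed
      also have "\<dots> = A i * ?S" by (simp add: A_def sum_distrib_right)
      finally show ?thesis .
    qed
    obtain s' where s': "s = Suc s'" using s by (cases s) auto
    let ?Q = "\<lambda>w. (\<Sum>q<s. \<Sum>i\<in>?I. (w q i)^2)"
    have QS: "?Q w = ?S^2" unfolding bnorm_def by (simp add: sum_nonneg)
    have f0: "(\<Sum>i\<in>?I. (Lop d n g s a b dt w 0 i)^2) \<le> M * ?S^2"
    proof -
      have "(\<Sum>i\<in>?I. (Lop d n g s a b dt w 0 i)^2) \<le> (\<Sum>i\<in>?I. (A i * ?S)^2)"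
      proof (intro sum_mono)
        fix i assume iI: "i \<in> ?I"
        have "(Lop d n g s a b dt w 0 i)^2 = \<bar>Lop d n g s a b dt w 0 i\<bar>^2" by simp
        also have "\<dots> \<le> (A i * ?S)^2" by (intro power_mono ent iI) simp
        finally show "(Lop d n g s a b dt w 0 i)^2 \<le> (A i * ?S)^2" .
      qed
      also have "\<dots> = M * ?S^2" by (simp add: M_def power_mult_distrib sum_distrib_right)
      finally show ?thesis .
    qed
    have "?Q (Lop d n g s a b dt w) = (\<Sum>i\<in>?I. (Lop d n g s a b dt w 0 i)^2) + (\<Sum>q<s'. \<Sum>i\<in>?I. (w q i)^2)"
      unfolding s' sum.lessThan_Suc_shift by (simp add: Lop_def)
    also have "(\<Sum>q<s'. \<Sum>i\<in>?I. (w q i)^2) \<le> ?Q w"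
      unfolding s' by (simp add: sum_nonneg)
    finally have "?Q (Lop d n g s a b dt w) \<le> (M + 1) * ?S^2" using f0 QS by (simp add: algebra_simps)
    then have "bnorm d n s (Lop d n g s a b dt w) \<le> sqrt ((M + 1) * ?S^2)"
      unfolding bnorm_def by (rule real_sqrt_le_mono)
    also have "\<dots> = sqrt (M + 1) * ?S" using S0 by (simp add: real_sqrt_mult)
    finally show "bnorm d n s (Lop d n g s a b dt w) \<le> sqrt (M + 1) * ?S" .
  qed
qed


theorem theorem3p2:
  fixes d s :: nat and n :: "nat \<Rightarrow> nat" and tr :: dtree and r :: "nat set \<Rightarrow> nat"
    and g :: "midx \<Rightarrow> midx \<Rightarrow> real" and a b :: "nat \<Rightarrow> real" and dt K :: real
    and v :: "nat \<Rightarrow> bvec"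
  assumes "dim_tree d tr"
    and "1 \<le> s"
    and "0 < dt"
    and "0 \<le> K"
    and "op_norm d n s (Lop d n g s a b dt) \<le> 1 + K * dt"
    and "\<And>k q. q < s \<Longrightarrow> is_trunc d n tr r (Lop d n g s a b dt (v k) q) (v (Suc k) q)"
  shows "\<forall>T>0. \<forall>k. real k * dt \<le> T \<longrightarrow>
           bnorm d n s (v k) \<le> exp (K * T) * bnorm d n s (v 0)"
proof -
  let ?L = "Lop d n g s a b dt"
  let ?Set = "{c. 0 \<le> c \<and> (\<forall>v. bnorm d n s (?L v) \<le> c * bnorm d n s v)}"
  have bn0: "0 \<le> bnorm d n s w" for w by (simp add: bnorm_def sum_nonneg)
  obtain c0 where c0: "c0 \<in> ?Set" using Lop_bounded[OF assms(2), of d n g a b dt] by auto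
  have Lb: "bnorm d n s (?L w) \<le> (1 + K * dt) * bnorm d n s w" for w
  proof (cases "bnorm d n s w = 0")
    case True
    then show ?thesis using c0 by auto (metis mult_zero_right)
  next
    case False
    then have pos: "0 < bnorm d n s w" using bn0[of w] by simp
    have "bnorm d n s (?L w) / bnorm d n s w \<le> Inf ?Set"
    proof (rule cInf_greatest)
      show "?Set \<noteq> {}" using c0 by auto
      fix c assume "c \<in> ?Set"
      then show "bnorm d n s (?L w) / bnorm d n s w \<le> c" using pos by (auto simp: divide_le_eq)
    qed
    then have "bnorm d n s (?L w) \<le> op_norm d n s ?L * bnorm d n s w"
      using pos by (simp add: op_norm_def divide_le_eq)
    also have "\<dots> \<le> (1 + K * dt) * bnorm d n s w"
      using assms(5) pos by (intro mult_right_mono) auto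
    finally show ?thesis .
  qed
  have step: "bnorm d n s (v (Suc k)) \<le> (1 + K * dt) * bnorm d n s (v k)" for k
  proof -
    have "bnorm d n s (v (Suc k)) \<le> bnorm d n s (?L (v k))"
      unfolding bnorm_def
      apply (rule real_sqrt_le_mono)
      apply (rule sum_mono)
      apply (rule trunc_contr)
      apply (rule assms(6))
      apply simp
      done
    also have "\<dots> \<le> (1 + K * dt) * bnorm d n s (v k)" by (rule Lb)
    finally show ?thesis .
  qed
  have pw: "bnorm d n s (v k) \<le> (1 + K * dt)^k * bnorm d n s (v 0)" for k
  proof (induction k)
    case 0 then show ?case by simp
  next
    case (Suc k)
    have "bnorm d n s (v (Suc k)) \<le> (1 + K * dt) * bnorm d n s (v k)" by (rule step)
    also have "\<dots> \<le> (1 + K * dt) * ((1 + K * dt)^k * bnorm d n s (v 0))"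
      using Suc assms(3,4) by (intro mult_left_mono) auto
    finally show ?case by (simp add: mult.assoc)
  qed
  show ?thesis
  proof (intro allI impI)
    fix T :: real and k assume T: "0 < T" and kT: "real k * dt \<le> T"
    have "(1 + K * dt)^k \<le> (exp (K * dt))^k"
      using assms(3,4) by (intro power_mono) (use exp_ge_add_one_self[of "K * dt"] in \<open>auto simp: add.commute\<close>)
    also have "\<dots> = exp (K * (real k * dt))" by (simp add: exp_of_nat_mult[symmetric] mult_ac)
    also have "\<dots> \<le> exp (K * T)" using kT assms(4) by (simp add: mult_left_mono)
    finally have "(1 + K * dt)^k \<le> exp (K * T)" .
    then have "(1 + K * dt)^k * bnorm d n s (v 0) \<le> exp (K * T) * bnorm d n s (v 0)"
      by (rule mult_right_mono) (rule bn0)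
    with pw[of k] show "bnorm d n s (v k) \<le> exp (K * T) * bnorm d n s (v 0)" by simp
  qed
qed

end
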